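(* Let $d\ge3$ and let $G_0$ be the Green's function (with pole at $0$) of the free Laplacian on $\mathbb Z^d$. Then for every $x\in\mathbb Z^d$, $$\sum_{y\in\mathbb Z^d:\,|y-x|=1}|G_0(x)-G_0(y)|>0.$$
   Context: The free Laplacian on $\mathbb Z^d$ is $\Delta f(x)=\sum_{y:|y-x|=1}(f(x)-f(y))$ and its Green's function is $G_0(x)=\lim_{\alpha\downarrow0}((\Delta+\alpha)^{-1}1_0)(x)$, which is finite for $d\ge3$. *)

theory Defs
  imports "HOL-Analysis.Analysis"
begin

text \<open>Points of Z^d are vectors int^'n, with d = CARD('n).\<close>

definition nbrs :: "int^'n \<Rightarrow> (int^'n) set" where
  "nbrs x = {y. (\<Sum>i\<in>UNIV. (y$i - x$i)^2) = 1}"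

definition lap :: "(int^'n \<Rightarrow> real) \<Rightarrow> int^'n \<Rightarrow> real" where
  "lap f x = (\<Sum>y\<in>nbrs x. f x - f y)"

definition resolvent0 :: "real \<Rightarrow> int^'n \<Rightarrow> real" where
  "resolvent0 \<alpha> = (THE f. (\<lambda>x. (f x)^2) summable_on UNIV \<and>
       (\<forall>x. lap f x + \<alpha> * f x = (if x = 0 then 1 else 0)))"

definition green0 :: "int^'n \<Rightarrow> real" where
  "green0 x = Lim (at_right 0) (\<lambda>\<alpha>. resolvent0 \<alpha> x)"

end

theory Submission imports Defs begin

definition uvec :: "'n::finite \<Rightarrow> int^'n" where
  "uvec i = (\<chi> j. if j = i then 1 else 0)"

lemma finite_box: "finite A \<Longrightarrow> finite {v::'a^'n. \<forall>i. v$i \<in> A}"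
proof -
  assume A: "finite A"
  have "{v::'a^'n. \<forall>i. v$i \<in> A} \<subseteq> vec_lambda ` (UNIV \<rightarrow>\<^sub>E A)"
  proof
    fix v :: "'a^'n" assume "v \<in> {v. \<forall>i. v$i \<in> A}"
    then have "(\<lambda>i. v$i) \<in> UNIV \<rightarrow>\<^sub>E A" by auto
    moreover have "v = vec_lambda (\<lambda>i. v$i)" by simp
    ultimately show "v \<in> vec_lambda ` (UNIV \<rightarrow>\<^sub>E A)" by blast
  qed
  moreover have "finite (vec_lambda ` (UNIV \<rightarrow>\<^sub>E A) :: ('a^'n) set)"
    using A by (intro finite_imageI finite_PiE) auto
  ultimately show ?thesis by (rule finite_subset)
qed

lemma nbrs_shift: "y \<in> nbrs x \<longleftrightarrow> y - x \<in> nbrs 0"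
  by (simp add: nbrs_def)

lemma nbrs_eq: "nbrs x = (\<lambda>v. x + v) ` nbrs 0"
proof (rule set_eqI)
  fix y show "y \<in> nbrs x \<longleftrightarrow> y \<in> (\<lambda>v. x + v) ` nbrs 0"
    using nbrs_shift[of y x] by (auto simp: nbrs_shift[of "x + _" x] intro: image_eqI[where x="y - x"])
qed

lemma nbrs_sym: "y \<in> nbrs x \<longleftrightarrow> x \<in> nbrs y"
proof -
  have "(y$i - x$i)^2 = (x$i - y$i)^2" for i by (simp add: power2_commute)
  then show ?thesis by (simp add: nbrs_def)
qed

lemma nbrs_comp: assumes "y \<in> nbrs x" shows "\<bar>y$i - x$i\<bar> \<le> 1"
proof -
  have "(y$i - x$i)^2 \<le> (\<Sum>j\<in>UNIV. (y$j - x$j)^2)"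
    by (rule member_le_sum) auto
  then have "(y$i - x$i)^2 \<le> 1" using assms by (simp add: nbrs_def)
  then show ?thesis by (simp add: abs_square_le_1)
qed

lemma finite_nbrs0: "finite (nbrs (0::int^'n))"
proof -
  have "nbrs (0::int^'n) \<subseteq> {v. \<forall>i. v$i \<in> {-1..1}}"
    using nbrs_comp[of _ 0] by (auto simp: abs_le_iff)
  then show ?thesis using finite_box[of "{-1..1::int}"] finite_subset by auto
qed

lemma finite_nbrs: "finite (nbrs x)"
  unfolding nbrs_eq[of x] by (rule finite_imageI[OF finite_nbrs0])

lemma uvec_nbrs: "uvec (i::'n::finite) \<in> nbrs 0"
proof -
  have "(\<Sum>j\<in>UNIV. ((uvec i)$j - (0::int^'n)$j)^2) = (\<Sum>j\<in>UNIV. if j = i then 1 else 0)"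
    by (intro sum.cong) (auto simp: uvec_def)
  also have "\<dots> = 1" by simp
  finally show ?thesis by (simp add: nbrs_def)
qed


lemma card_nbrs: "card (nbrs (x::int^'n)) = card (nbrs (0::int^'n))"
  by (simp add: nbrs_eq[of x] card_image inj_on_def)

lemma cc_pos: "card (nbrs (0::int^'n)) > 0"
  using finite_nbrs0 uvec_nbrs card_gt_0_iff by blast

lemma sum_nbrs: "(\<Sum>y\<in>nbrs x. g y) = (\<Sum>v\<in>nbrs 0. g (x + v))"
  by (simp add: nbrs_eq[of x] sum.reindex inj_on_def)

lemma lap_eq: "lap f (x::int^'n) = real (card (nbrs (0::int^'n))) * f x - (\<Sum>y\<in>nbrs x. f y)"
  by (simp add: lap_def sum_subtractf card_nbrs[of x])

definition box :: "nat \<Rightarrow> (int^'n) set" where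
  "box n = {x. \<forall>i. x$i \<in> {-int n..int n}}"

lemma finite_boxn: "finite (box n)"
  unfolding box_def by (rule finite_box) simp

lemma box_nbrs: assumes "x \<in> box n" "y \<in> nbrs x" shows "y \<in> box (Suc n)"
proof -
  have "y$i \<in> {-int (Suc n)..int (Suc n)}" for i
  proof -
    have a: "\<bar>y$i - x$i\<bar> \<le> 1" by (rule nbrs_comp[OF assms(2)])
    have b: "x$i \<in> {-int n..int n}" using assms(1) unfolding box_def by blast
    show ?thesis using a b by arith
  qed
  then show ?thesis by (simp add: box_def)
qed

lemma box_mono: assumes "m \<le> n" shows "box m \<subseteq> box n"
proof
  fix x :: "int^'n" assume x: "x \<in> box m"
  have "x$i \<in> {-int n..int n}" for i
  proof -
    have "x$i \<in> {-int m..int m}" using x unfolding box_def by blast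
    then show ?thesis using assms by auto
  qed
  then show "x \<in> box n" by (simp add: box_def)
qed

primrec pw :: "nat \<Rightarrow> int^'n::finite \<Rightarrow> real" where
  "pw 0 x = (if x = 0 then 1 else 0)"
| "pw (Suc n) x = (\<Sum>y\<in>nbrs x. pw n y) / real (card (nbrs (0::int^'n)))"

lemma pw_nonneg: "pw n x \<ge> 0"
proof (induction n arbitrary: x)
  case (Suc n)
  have "(\<Sum>y\<in>nbrs x. pw n y) \<ge> 0" using Suc by (intro sum_nonneg) auto
  then show ?case by simp
qed simp

lemma pw_sum_le: "finite F \<Longrightarrow> (\<Sum>x\<in>F. pw n (x::int^'n)) \<le> 1"
proof (induction n arbitrary: F)
  case 0
  then show ?case by (simp add: sum.delta)
next
  case (Suc n)
  have e: "pw (Suc n) x = (\<Sum>v\<in>nbrs 0. pw n (x + v)) / real (card (nbrs (0::int^'n)))" for x :: "int^'n"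
    using sum_nbrs[of "pw n" x] by simp
  have "(\<Sum>x\<in>F. pw (Suc n) x) = (\<Sum>x\<in>F. \<Sum>v\<in>nbrs 0. pw n (x + v)) / real (card (nbrs (0::int^'n)))"
    by (simp only: e sum_divide_distrib)
  also have "(\<Sum>x\<in>F. \<Sum>v\<in>nbrs 0. pw n (x + v)) = (\<Sum>v\<in>nbrs 0. \<Sum>x\<in>F. pw n (x + v))"
    by (rule sum.swap)
  also have "\<dots> \<le> (\<Sum>v\<in>nbrs (0::int^'n). 1)"
  proof (rule sum_mono)
    fix v :: "int^'n"
    have "(\<Sum>x\<in>F. pw n (x + v)) = (\<Sum>y\<in>(\<lambda>x. x + v) ` F. pw n y)"
      by (simp add: sum.reindex inj_on_def)
    also have "\<dots> \<le> 1" using Suc by auto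
    finally show "(\<Sum>x\<in>F. pw n (x + v)) \<le> 1" .
  qed
  finally show ?case using cc_pos[where 'n='n] by (simp add: divide_le_eq)
qed

lemma pw_le1: "pw n x \<le> 1"
  using pw_sum_le[of "{x}" n] by simp

lemma pw_support: "pw n x \<noteq> 0 \<Longrightarrow> x \<in> box n"
proof (induction n arbitrary: x)
  case 0 then show ?case by (auto simp: box_def split: if_splits)
next
  case (Suc n)
  then have "(\<Sum>y\<in>nbrs x. pw n y) \<noteq> 0" by auto
  then obtain y where "y \<in> nbrs x" "pw n y \<noteq> 0" by (meson sum.neutral)
  then show ?case using Suc.IH box_nbrs nbrs_sym by blast
qed


section \<open>Maximum principle\<close>

lemma l2_fin:
  fixes f :: "'a \<Rightarrow> real"
  assumes sm: "(\<lambda>x. (f x)^2) summable_on UNIV" and e: "\<epsilon> > 0"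
  shows "finite {x. f x \<ge> \<epsilon>}"
proof (rule ccontr)
  assume inf: "infinite {x. f x \<ge> \<epsilon>}"
  define s where "s = infsum (\<lambda>x. (f x)^2) UNIV"
  define m where "m = Suc (nat \<lceil>s / \<epsilon>^2\<rceil>)"
  obtain B where B: "finite B" "card B = m" "B \<subseteq> {x. f x \<ge> \<epsilon>}"
    using infinite_arbitrarily_large[OF inf] by blast
  have "(\<Sum>x\<in>B. (f x)^2) \<le> s"
    unfolding s_def by (rule finite_sum_le_infsum[OF sm B(1)]) auto
  moreover have "(\<Sum>x\<in>B. \<epsilon>^2) \<le> (\<Sum>x\<in>B. (f x)^2)"
  proof (rule sum_mono)
    fix x assume "x \<in> B"
    then have "\<epsilon> \<le> f x" using B(3) by auto
    then show "\<epsilon>^2 \<le> (f x)^2" using e by (intro power_mono) auto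
  qed
  ultimately have "real m * \<epsilon>^2 \<le> s" using B(2) by simp
  moreover have "s / \<epsilon>^2 < real m" unfolding m_def by linarith
  then have "s < real m * \<epsilon>^2" using e by (simp add: divide_less_eq)
  ultimately show False by linarith
qed

lemma mp_max:
  fixes g :: "'a \<Rightarrow> real"
  assumes fin: "\<And>\<epsilon>. \<epsilon> > 0 \<Longrightarrow> finite {x\<in>S. g x \<ge> \<epsilon>}" and z1: "z1 \<in> S" "g z1 > 0"
  obtains z0 where "z0 \<in> S" "g z0 > 0" "\<And>z. z \<in> S \<Longrightarrow> g z \<le> g z0"
proof -
  define A where "A = {x\<in>S. g x \<ge> g z1}"
  have finA: "finite A" unfolding A_def using fin[OF z1(2)] .
  have z1A: "z1 \<in> A" using z1 by (simp add: A_def)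
  then have ne: "g ` A \<noteq> {}" by auto
  have "Max (g ` A) \<in> g ` A" using finA ne by (intro Max_in) auto
  then obtain z0 where z0: "z0 \<in> A" "g z0 = Max (g ` A)" by auto
  have ge: "g z \<le> g z0" if "z \<in> A" for z
    using that finA z0(2) by (simp add: Max_ge)
  show ?thesis
  proof (rule that)
    show "z0 \<in> S" using z0 by (simp add: A_def)
    show "g z0 > 0" using ge[OF z1A] z1 by simp
    fix z assume "z \<in> S"
    show "g z \<le> g z0"
    proof (cases "g z \<ge> g z1")
      case True then show ?thesis using ge \<open>z \<in> S\<close> by (simp add: A_def)
    next
      case False then show ?thesis using ge[OF z1A] by simp
    qed
  qed
qed

lemma lap_max_nonneg:
  assumes "\<And>y. y \<in> nbrs x \<Longrightarrow> g y \<le> g x"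
  shows "lap g x \<ge> 0"
  unfolding lap_def using assms by (intro sum_nonneg) auto

lemma l2_fin_UNIV:
  fixes f :: "int^'n \<Rightarrow> real"
  assumes "(\<lambda>x. (f x)^2) summable_on UNIV" "\<epsilon> > 0"
  shows "finite {x\<in>UNIV. f x \<ge> \<epsilon>}"
  using l2_fin[OF assms] by simp

lemma unique_l2:
  fixes g :: "int^'n \<Rightarrow> real"
  assumes sm: "(\<lambda>x. (g x)^2) summable_on UNIV" and a: "\<alpha> > 0"
    and eq: "\<And>x. lap g x + \<alpha> * g x = 0"
  shows "g x = 0"
proof -
  have le: "h z \<le> 0" if smh: "(\<lambda>x. (h x)^2) summable_on UNIV" and eqh: "\<And>x. lap h x + \<alpha> * h x = 0"
    for h :: "int^'n \<Rightarrow> real" and z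
  proof (rule ccontr)
    assume "\<not> h z \<le> 0"
    then have "h z > 0" by simp
    then obtain z0 where z0: "h z0 > 0" "\<And>y. h y \<le> h z0"
      using mp_max[of UNIV h z] l2_fin_UNIV[OF smh] by auto
    have "lap h z0 \<ge> 0" using z0 by (intro lap_max_nonneg) auto
    then have "lap h z0 + \<alpha> * h z0 > 0" using z0 a by (simp add: add_nonneg_pos)
    then show False using eqh[of z0] by simp
  qed
  have "g x \<le> 0" using le[OF sm eq] .
  moreover have "(\<lambda>x. (- g x)^2) summable_on UNIV" using sm by simp
  moreover have "lap (\<lambda>x. - g x) y + \<alpha> * (- g y) = 0" for y
  proof -
    have "lap (\<lambda>x. - g x) y = - lap g y" unfolding lap_def by (simp add: sum_negf[symmetric])
    then show ?thesis using eq[of y] by simp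
  qed
  ultimately have "(\<lambda>x. - g x) x \<le> 0" "g x \<le> 0" using le[of "\<lambda>x. - g x" x] by blast+
  then show ?thesis by simp
qed


section \<open>Neumann series\<close>

definition co :: "real \<Rightarrow> real \<Rightarrow> nat \<Rightarrow> real" where
  "co c \<alpha> n = c^n / (c + \<alpha>)^(Suc n)"

lemma co_nonneg: "c > 0 \<Longrightarrow> \<alpha> \<ge> 0 \<Longrightarrow> co c \<alpha> n \<ge> 0"
  by (simp add: co_def)

lemma co_alt: "c > 0 \<Longrightarrow> \<alpha> \<ge> 0 \<Longrightarrow> co c \<alpha> n = (1/(c+\<alpha>)) * (c/(c+\<alpha>))^n"
  by (simp add: co_def power_divide)

lemma co_sums: assumes "c > 0" "\<alpha> > 0" shows "(co c \<alpha>) sums (1/\<alpha>)"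
proof -
  have b0: "c/(c+\<alpha>) < 1" "c/(c+\<alpha>) > 0" using assms by simp_all
  then have b: "norm (c/(c+\<alpha>)) < 1" by (metis real_norm_def abs_of_pos)
  have "(\<lambda>n. (1/(c+\<alpha>)) * (c/(c+\<alpha>))^n) sums ((1/(c+\<alpha>)) * (1 / (1 - c/(c+\<alpha>))))"
    by (intro sums_mult geometric_sums b)
  moreover have "(1/(c+\<alpha>)) * (1 / (1 - c/(c+\<alpha>))) = 1/\<alpha>"
    using assms by (simp add: field_simps)
  moreover have "co c \<alpha> = (\<lambda>n. (1/(c+\<alpha>)) * (c/(c+\<alpha>))^n)"
    using co_alt[of c \<alpha>] assms by fastforce
  ultimately show ?thesis by simp
qed

lemma co_step: assumes "c > 0" "\<alpha> \<ge> 0" shows "c * co c \<alpha> n = (c + \<alpha>) * co c \<alpha> (Suc n)"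
proof -
  have ne: "c + \<alpha> \<noteq> 0" using assms by simp
  have "(c + \<alpha>) * co c \<alpha> (Suc n) = ((c + \<alpha>) * c^(Suc n)) / ((c+\<alpha>) * (c + \<alpha>)^(Suc n))"
    by (simp add: co_def)
  also have "\<dots> = c^(Suc n) / (c + \<alpha>)^(Suc n)" using ne by (rule mult_divide_mult_cancel_left)
  also have "\<dots> = c * co c \<alpha> n" by (simp add: co_def)
  finally show ?thesis by simp
qed

definition res :: "real \<Rightarrow> int^'n::finite \<Rightarrow> real" where
  "res \<alpha> x = (\<Sum>n. co (real (card (nbrs (0::int^'n)))) \<alpha> n * pw n x)"

lemma cpos: "real (card (nbrs (0::int^'n::finite))) > 0"
  using cc_pos by simp

lemma res_summable:
  assumes "\<alpha> > 0"
  shows "summable (\<lambda>n. co (real (card (nbrs (0::int^'n)))) \<alpha> n * pw n (x::int^'n::finite))"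
proof (rule summable_comparison_test'[where N=0])
  show "summable (co (real (card (nbrs (0::int^'n)))) \<alpha>)"
    using co_sums[OF cpos assms] sums_summable by blast
  fix n
  show "norm (co (real (card (nbrs (0::int^'n)))) \<alpha> n * pw n x) \<le> co (real (card (nbrs (0::int^'n)))) \<alpha> n"
    using co_nonneg[OF cpos[where 'n='n], of \<alpha> n] assms pw_nonneg[of n x] pw_le1[of n x]
    by (simp add: abs_mult mult_left_le abs_of_nonneg)
qed

lemma res_nonneg: "\<alpha> > 0 \<Longrightarrow> res \<alpha> (x::int^'n::finite) \<ge> 0"
  unfolding res_def using co_nonneg[OF cpos[where 'n='n]] pw_nonneg
  by (intro suminf_nonneg res_summable mult_nonneg_nonneg) auto

lemma res_sum_le:
  assumes a: "\<alpha> > 0" and F: "finite F"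
  shows "(\<Sum>x\<in>F. res \<alpha> (x::int^'n::finite)) \<le> 1/\<alpha>"
proof -
  define c where "c = real (card (nbrs (0::int^'n)))"
  have c: "c > 0" unfolding c_def by (rule cpos)
  have "(\<Sum>x\<in>F. res \<alpha> x) = (\<Sum>n. \<Sum>x\<in>F. co c \<alpha> n * pw n x)"
    unfolding res_def c_def by (rule suminf_sum[symmetric]) (rule res_summable[OF a])
  also have "\<dots> \<le> (\<Sum>n. co c \<alpha> n)"
  proof (rule suminf_le)
    fix n
    have "(\<Sum>x\<in>F. co c \<alpha> n * pw n x) = co c \<alpha> n * (\<Sum>x\<in>F. pw n x)"
      by (simp add: sum_distrib_left)
    also have "\<dots> \<le> co c \<alpha> n" using pw_sum_le[OF F, of n] co_nonneg[OF c, of \<alpha> n] a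
      by (simp add: mult_left_le)
    finally show "(\<Sum>x\<in>F. co c \<alpha> n * pw n x) \<le> co c \<alpha> n" .
    show "summable (\<lambda>n. \<Sum>x\<in>F. co c \<alpha> n * pw n x)"
      unfolding c_def by (intro summable_sum res_summable[OF a])
    show "summable (co c \<alpha>)" using co_sums[OF c a] sums_summable by blast
  qed
  also have "\<dots> = 1/\<alpha>" using co_sums[OF c a] sums_unique by fastforce
  finally show ?thesis .
qed

lemma res_le: "\<alpha> > 0 \<Longrightarrow> res \<alpha> (x::int^'n::finite) \<le> 1/\<alpha>"
  using res_sum_le[of \<alpha> "{x}"] by simp

lemma res_eq:
  assumes a: "\<alpha> > 0"
  shows "lap (res \<alpha>) (x::int^'n::finite) + \<alpha> * res \<alpha> x = (if x = 0 then 1 else 0)"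
proof -
  define c where "c = real (card (nbrs (0::int^'n)))"
  have c: "c > 0" unfolding c_def by (rule cpos)
  have sm: "summable (\<lambda>n. co c \<alpha> n * pw n y)" for y :: "int^'n"
    unfolding c_def by (rule res_summable[OF a])
  have "(\<Sum>y\<in>nbrs x. res \<alpha> y) = (\<Sum>n. \<Sum>y\<in>nbrs x. co c \<alpha> n * pw n y)"
    unfolding res_def c_def[symmetric] by (subst suminf_sum) (use sm in auto)
  also have "\<dots> = (\<Sum>n. (c + \<alpha>) * (co c \<alpha> (Suc n) * pw (Suc n) x))"
  proof (rule suminf_cong)
    fix n
    have "(\<Sum>y\<in>nbrs x. co c \<alpha> n * pw n y) = co c \<alpha> n * (\<Sum>y\<in>nbrs x. pw n y)"
      by (simp add: sum_distrib_left)
    also have "(\<Sum>y\<in>nbrs x. pw n y) = c * pw (Suc n) x" using c by (simp add: c_def)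
    also have "co c \<alpha> n * (c * pw (Suc n) x) = (c * co c \<alpha> n) * pw (Suc n) x" by simp
    also have "\<dots> = (c + \<alpha>) * (co c \<alpha> (Suc n) * pw (Suc n) x)" using co_step[OF c, of \<alpha> n] a by simp
    finally show "(\<Sum>y\<in>nbrs x. co c \<alpha> n * pw n y) = (c + \<alpha>) * (co c \<alpha> (Suc n) * pw (Suc n) x)" .
  qed
  also have "\<dots> = (c + \<alpha>) * (\<Sum>n. co c \<alpha> (Suc n) * pw (Suc n) x)"
    by (rule suminf_mult) (rule summable_Suc_iff[THEN iffD2, OF sm])
  also have "(\<Sum>n. co c \<alpha> (Suc n) * pw (Suc n) x) = res \<alpha> x - co c \<alpha> 0 * pw 0 x"
    unfolding res_def c_def by (rule suminf_split_head) (rule res_summable[OF a])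
  finally have S: "(\<Sum>y\<in>nbrs x. res \<alpha> y) = (c + \<alpha>) * (res \<alpha> x - co c \<alpha> 0 * pw 0 x)" .
  have "lap (res \<alpha>) x + \<alpha> * res \<alpha> x = (c + \<alpha>) * res \<alpha> x - (\<Sum>y\<in>nbrs x. res \<alpha> y)"
    by (simp add: lap_eq c_def algebra_simps)
  also have "\<dots> = (c + \<alpha>) * (co c \<alpha> 0 * pw 0 x)" by (simp add: S algebra_simps)
  also have "\<dots> = pw 0 x" using c a by (simp add: co_def)
  finally show ?thesis by simp
qed

lemma res_l2:
  assumes a: "\<alpha> > 0"
  shows "(\<lambda>x. (res \<alpha> x)^2) summable_on (UNIV::(int^'n::finite) set)"
proof -
  have bd: "(\<Sum>x\<in>F. (res \<alpha> x)^2) \<le> (1/\<alpha>) / \<alpha>" if F: "finite F" for F :: "(int^'n) set"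
  proof -
    have "(\<Sum>x\<in>F. (res \<alpha> x)^2) \<le> (\<Sum>x\<in>F. res \<alpha> x / \<alpha>)"
    proof (rule sum_mono)
      fix x
      have "(res \<alpha> x)^2 = res \<alpha> x * res \<alpha> x" by (simp add: power2_eq_square)
      also have "\<dots> \<le> res \<alpha> x * (1/\<alpha>)"
        using res_le[OF a, of x] res_nonneg[OF a, of x] by (intro mult_left_mono) auto
      finally show "(res \<alpha> x)^2 \<le> res \<alpha> x / \<alpha>" by simp
    qed
    also have "\<dots> = (\<Sum>x\<in>F. res \<alpha> x) / \<alpha>" by (simp add: sum_divide_distrib)
    also have "\<dots> \<le> (1/\<alpha>) / \<alpha>" using res_sum_le[OF a F] a by (intro divide_right_mono) auto
    finally show ?thesis .
  qed
  show ?thesis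
    by (rule nonneg_bdd_above_summable_on) (auto intro!: bdd_aboveI2 bd)
qed

lemma resolvent0_eq:
  assumes a: "\<alpha> > 0"
  shows "resolvent0 \<alpha> = (res \<alpha> :: int^'n::finite \<Rightarrow> real)"
  unfolding resolvent0_def
proof (rule the_equality)
  show "(\<lambda>x. (res \<alpha> x)^2) summable_on UNIV \<and> (\<forall>x. lap (res \<alpha>) x + \<alpha> * res \<alpha> x = (if x = 0 then 1 else 0))"
    using res_l2[OF a] res_eq[OF a] by blast
  fix f :: "int^'n \<Rightarrow> real"
  assume f: "(\<lambda>x. (f x)^2) summable_on UNIV \<and> (\<forall>x. lap f x + \<alpha> * f x = (if x = 0 then 1 else 0))"
  define g where "g x = f x - res \<alpha> x" for x
  have "(\<lambda>x. (g x)^2) summable_on UNIV"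
  proof (rule summable_on_comparison_test)
    show "(\<lambda>x. 2 * (f x)^2 + 2 * (res \<alpha> x)^2) summable_on UNIV"
      using f res_l2[OF a] by (intro summable_on_add summable_on_cmult_right) auto
    fix x
    have h: "0 \<le> (f x + res \<alpha> x)^2" by simp
    show "(g x)^2 \<le> 2 * (f x)^2 + 2 * (res \<alpha> x)^2"
      unfolding g_def using h unfolding power2_diff power2_sum by linarith
    show "0 \<le> (g x)^2" by simp
  qed
  moreover have "lap g x + \<alpha> * g x = 0" for x
  proof -
    have "lap g x = lap f x - lap (res \<alpha>) x" unfolding lap_def g_def by (simp add: sum_subtractf[symmetric] algebra_simps)
    moreover have "\<alpha> * g x = \<alpha> * f x - \<alpha> * res \<alpha> x" by (simp add: g_def right_diff_distrib)
    moreover have "lap f x + \<alpha> * f x = (if x = 0 then 1 else 0)" using f by blast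
    ultimately show ?thesis using res_eq[OF a, of x] by linarith
  qed
  ultimately have "g x = 0" for x using unique_l2[OF _ a] by blast
  then show "f = res \<alpha>" unfolding g_def by fastforce
qed


section \<open>The Polya flow on the octant\<close>

definition Lv :: "nat \<Rightarrow> (nat\<times>nat\<times>nat) set" where
  "Lv n = {(i,j,k). i+j+k = n}"

lemma finite_Lv: "finite (Lv n)"
proof -
  have "Lv n \<subseteq> {..n} \<times> {..n} \<times> {..n}" by (auto simp: Lv_def)
  then show ?thesis by (rule finite_subset) auto
qed

lemma Lv_0: "Lv 0 = {(0,0,0)}" by (auto simp: Lv_def)

definition mu :: "nat \<Rightarrow> real" where "mu n = 2 / ((real n + 1) * (real n + 2))"

definition ft :: "(nat\<times>nat\<times>nat \<Rightarrow> real) \<Rightarrow> nat \<Rightarrow> nat\<times>nat\<times>nat \<Rightarrow> real" where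
  "ft g n = (\<lambda>(i,j,k). mu n / (real n + 3) * ((real i + 1) * (g (i,j,k) - g (Suc i,j,k))
      + (real j + 1) * (g (i,j,k) - g (i,Suc j,k)) + (real k + 1) * (g (i,j,k) - g (i,j,Suc k))))"

lemma RI1: "(\<Sum>p\<in>Lv R. (case p of (i,j,k) \<Rightarrow> (real i + 1) * h (Suc i,j,k)))
   = (\<Sum>q\<in>Lv (Suc R). (case q of (i,j,k) \<Rightarrow> real i * h (i,j,k)))"
proof -
  let ?s = "\<lambda>(i::nat,j::nat,k::nat). (Suc i, j, k)"
  have img: "?s ` Lv R = {q\<in>Lv (Suc R). fst q \<noteq> 0}"
  proof
    show "?s ` Lv R \<subseteq> {q\<in>Lv (Suc R). fst q \<noteq> 0}" by (auto simp: Lv_def)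
    show "{q\<in>Lv (Suc R). fst q \<noteq> 0} \<subseteq> ?s ` Lv R"
    proof
      fix q assume q: "q \<in> {q\<in>Lv (Suc R). fst q \<noteq> 0}"
      obtain i j k where qe: "q = (i,j,k)" by (cases q) auto
      then have "i \<noteq> 0" "i + j + k = Suc R" using q by (auto simp: Lv_def)
      then have "(i - 1, j, k) \<in> Lv R" "q = ?s (i - 1, j, k)" using qe by (auto simp: Lv_def)
      then show "q \<in> ?s ` Lv R" by blast
    qed
  qed
  have inj: "inj_on ?s (Lv R)" by (auto simp: inj_on_def)
  have "(\<Sum>q\<in>Lv (Suc R). (case q of (i,j,k) \<Rightarrow> real i * h (i,j,k)))
      = (\<Sum>q\<in>{q\<in>Lv (Suc R). fst q \<noteq> 0}. (case q of (i,j,k) \<Rightarrow> real i * h (i,j,k)))"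
    by (rule sum.mono_neutral_right) (auto simp: finite_Lv)
  also have "\<dots> = (\<Sum>p\<in>Lv R. (case ?s p of (i,j,k) \<Rightarrow> real i * h (i,j,k)))"
    unfolding img[symmetric] by (simp only: sum.reindex[OF inj] comp_def)
  also have "\<dots> = (\<Sum>p\<in>Lv R. (case p of (i,j,k) \<Rightarrow> (real i + 1) * h (Suc i,j,k)))"
    by (intro sum.cong) (auto simp: add.commute)
  finally show ?thesis by simp
qed

lemma RI2: "(\<Sum>p\<in>Lv R. (case p of (i,j,k) \<Rightarrow> (real j + 1) * h (i,Suc j,k)))
   = (\<Sum>q\<in>Lv (Suc R). (case q of (i,j,k) \<Rightarrow> real j * h (i,j,k)))"
proof -
  let ?s = "\<lambda>(i::nat,j::nat,k::nat). (i, Suc j, k)"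
  have img: "?s ` Lv R = {q\<in>Lv (Suc R). fst (snd q) \<noteq> 0}"
  proof
    show "?s ` Lv R \<subseteq> {q\<in>Lv (Suc R). fst (snd q) \<noteq> 0}" by (auto simp: Lv_def)
    show "{q\<in>Lv (Suc R). fst (snd q) \<noteq> 0} \<subseteq> ?s ` Lv R"
    proof
      fix q assume q: "q \<in> {q\<in>Lv (Suc R). fst (snd q) \<noteq> 0}"
      obtain i j k where qe: "q = (i,j,k)" by (cases q) auto
      then have "j \<noteq> 0" "i + j + k = Suc R" using q by (auto simp: Lv_def)
      then have "(i, j - 1, k) \<in> Lv R" "q = ?s (i, j - 1, k)" using qe by (auto simp: Lv_def)
      then show "q \<in> ?s ` Lv R" by blast
    qed
  qed
  have inj: "inj_on ?s (Lv R)" by (auto simp: inj_on_def)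
  have "(\<Sum>q\<in>Lv (Suc R). (case q of (i,j,k) \<Rightarrow> real j * h (i,j,k)))
      = (\<Sum>q\<in>{q\<in>Lv (Suc R). fst (snd q) \<noteq> 0}. (case q of (i,j,k) \<Rightarrow> real j * h (i,j,k)))"
    by (rule sum.mono_neutral_right) (auto simp: finite_Lv)
  also have "\<dots> = (\<Sum>p\<in>Lv R. (case ?s p of (i,j,k) \<Rightarrow> real j * h (i,j,k)))"
    unfolding img[symmetric] by (simp only: sum.reindex[OF inj] comp_def)
  also have "\<dots> = (\<Sum>p\<in>Lv R. (case p of (i,j,k) \<Rightarrow> (real j + 1) * h (i,Suc j,k)))"
    by (intro sum.cong) (auto simp: add.commute)
  finally show ?thesis by simp
qed

lemma RI3: "(\<Sum>p\<in>Lv R. (case p of (i,j,k) \<Rightarrow> (real k + 1) * h (i,j,Suc k)))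
   = (\<Sum>q\<in>Lv (Suc R). (case q of (i,j,k) \<Rightarrow> real k * h (i,j,k)))"
proof -
  let ?s = "\<lambda>(i::nat,j::nat,k::nat). (i, j, Suc k)"
  have img: "?s ` Lv R = {q\<in>Lv (Suc R). snd (snd q) \<noteq> 0}"
  proof
    show "?s ` Lv R \<subseteq> {q\<in>Lv (Suc R). snd (snd q) \<noteq> 0}" by (auto simp: Lv_def)
    show "{q\<in>Lv (Suc R). snd (snd q) \<noteq> 0} \<subseteq> ?s ` Lv R"
    proof
      fix q assume q: "q \<in> {q\<in>Lv (Suc R). snd (snd q) \<noteq> 0}"
      obtain i j k where qe: "q = (i,j,k)" by (cases q) auto
      then have "k \<noteq> 0" "i + j + k = Suc R" using q by (auto simp: Lv_def)
      then have "(i, j, k - 1) \<in> Lv R" "q = ?s (i, j, k - 1)" using qe by (auto simp: Lv_def)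
      then show "q \<in> ?s ` Lv R" by blast
    qed
  qed
  have inj: "inj_on ?s (Lv R)" by (auto simp: inj_on_def)
  have "(\<Sum>q\<in>Lv (Suc R). (case q of (i,j,k) \<Rightarrow> real k * h (i,j,k)))
      = (\<Sum>q\<in>{q\<in>Lv (Suc R). snd (snd q) \<noteq> 0}. (case q of (i,j,k) \<Rightarrow> real k * h (i,j,k)))"
    by (rule sum.mono_neutral_right) (auto simp: finite_Lv)
  also have "\<dots> = (\<Sum>p\<in>Lv R. (case ?s p of (i,j,k) \<Rightarrow> real k * h (i,j,k)))"
    unfolding img[symmetric] by (simp only: sum.reindex[OF inj] comp_def)
  also have "\<dots> = (\<Sum>p\<in>Lv R. (case p of (i,j,k) \<Rightarrow> (real k + 1) * h (i,j,Suc k)))"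
    by (intro sum.cong) (auto simp: add.commute)
  finally show ?thesis by simp
qed

lemma ft_level:
  "(\<Sum>p\<in>Lv R. ft g R p) = mu R * (\<Sum>p\<in>Lv R. g p) - mu (Suc R) * (\<Sum>p\<in>Lv (Suc R). g p)"
proof -
  define K where "K = mu R / (real R + 3)"
  have split: "ft g R p = K * ((real R + 3) * g p)
     - K * (case p of (i,j,k) \<Rightarrow> (real i + 1) * g (Suc i,j,k))
     - K * (case p of (i,j,k) \<Rightarrow> (real j + 1) * g (i,Suc j,k))
     - K * (case p of (i,j,k) \<Rightarrow> (real k + 1) * g (i,j,Suc k))" if "p \<in> Lv R" for p
  proof -
    obtain i j k where pe: "p = (i,j,k)" by (cases p) auto
    then have e: "real R = real i + real j + real k" using that by (auto simp: Lv_def)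
    have A: "(real i + 1)*(g (i,j,k) - g (Suc i,j,k)) + (real j+1)*(g (i,j,k) - g (i,Suc j,k))
       + (real k+1)*(g (i,j,k) - g (i,j,Suc k)) = (real R + 3)*g (i,j,k) - (real i+1)*g (Suc i,j,k)
       - (real j+1)*g (i,Suc j,k) - (real k+1)*g (i,j,Suc k)"
      unfolding e by (simp add: algebra_simps)
    show ?thesis unfolding pe ft_def K_def[symmetric] prod.case by (subst A) (simp add: right_diff_distrib)
  qed
  have lev: "(\<Sum>q\<in>Lv (Suc R). (case q of (i,j,k) \<Rightarrow> real i * g (i,j,k)))
     + (\<Sum>q\<in>Lv (Suc R). (case q of (i,j,k) \<Rightarrow> real j * g (i,j,k)))
     + (\<Sum>q\<in>Lv (Suc R). (case q of (i,j,k) \<Rightarrow> real k * g (i,j,k)))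
     = (real R + 1) * (\<Sum>q\<in>Lv (Suc R). g q)"
  proof -
    have "(\<Sum>q\<in>Lv (Suc R). (case q of (i,j,k) \<Rightarrow> real i * g (i,j,k)))
     + (\<Sum>q\<in>Lv (Suc R). (case q of (i,j,k) \<Rightarrow> real j * g (i,j,k)))
     + (\<Sum>q\<in>Lv (Suc R). (case q of (i,j,k) \<Rightarrow> real k * g (i,j,k)))
     = (\<Sum>q\<in>Lv (Suc R). (case q of (i,j,k) \<Rightarrow> real i * g (i,j,k)) + (case q of (i,j,k) \<Rightarrow> real j * g (i,j,k))
          + (case q of (i,j,k) \<Rightarrow> real k * g (i,j,k)))"
      by (simp add: sum.distrib)
    also have "\<dots> = (\<Sum>q\<in>Lv (Suc R). (real R + 1) * g q)"
    proof (rule sum.cong)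
      fix q assume "q \<in> Lv (Suc R)"
      moreover obtain i j k where "q = (i,j,k)" by (cases q) auto
      ultimately show "(case q of (i,j,k) \<Rightarrow> real i * g (i,j,k)) + (case q of (i,j,k) \<Rightarrow> real j * g (i,j,k))
          + (case q of (i,j,k) \<Rightarrow> real k * g (i,j,k)) = (real R + 1) * g q"
        by (auto simp: Lv_def algebra_simps simp flip: of_nat_add distrib_right)
    qed simp
    finally show ?thesis by (simp add: sum_distrib_left)
  qed
  define b1 where "b1 = (\<lambda>p. case p of (i,j,k) \<Rightarrow> (real i + 1) * g (Suc i,j,k))"
  define b2 where "b2 = (\<lambda>p. case p of (i,j,k) \<Rightarrow> (real j + 1) * g (i,Suc j,k))"
  define b3 where "b3 = (\<lambda>p. case p of (i,j,k) \<Rightarrow> (real k + 1) * g (i,j,Suc k))"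
  have "(\<Sum>p\<in>Lv R. ft g R p) = (\<Sum>p\<in>Lv R. K * ((real R + 3) * g p) - K * b1 p - K * b2 p - K * b3 p)"
    using split unfolding b1_def b2_def b3_def by (intro sum.cong) auto
  also have "\<dots> = K * (real R + 3) * (\<Sum>p\<in>Lv R. g p) - K * ((\<Sum>p\<in>Lv R. b1 p) + (\<Sum>p\<in>Lv R. b2 p) + (\<Sum>p\<in>Lv R. b3 p))"
    by (simp only: sum_subtractf sum_distrib_left[symmetric] mult.assoc)
       (simp add: algebra_simps)
  also have "(\<Sum>p\<in>Lv R. b1 p) + (\<Sum>p\<in>Lv R. b2 p) + (\<Sum>p\<in>Lv R. b3 p) = (real R + 1) * (\<Sum>q\<in>Lv (Suc R). g q)"
    unfolding b1_def b2_def b3_def by (simp only: RI1 RI2 RI3 lev)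
  also have "K * (real R + 3) = mu R" unfolding K_def by simp
  also have "K * ((real R + 1) * (\<Sum>q\<in>Lv (Suc R). g q)) = mu (Suc R) * (\<Sum>q\<in>Lv (Suc R). g q)"
  proof -
    have "mu R / (real R + 3) * (real R + 1) = mu (Suc R)"
    proof -
      have p: "real R + 1 \<noteq> 0" "real R + 2 \<noteq> 0" "real R + 3 \<noteq> 0" by linarith+
      have "mu R / (real R + 3) * (real R + 1) = ((real R + 1) * 2) / ((real R + 1) * ((real R + 2) * (real R + 3)))"
        unfolding mu_def by (simp add: mult.assoc mult.commute)
      also have "\<dots> = 2 / ((real R + 2) * (real R + 3))" using p(1) by (rule mult_divide_mult_cancel_left)
      also have "\<dots> = mu (Suc R)" unfolding mu_def by (simp add: add.assoc add.commute)
      finally show ?thesis .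
    qed
    then show ?thesis unfolding K_def by (metis mult.assoc)
  qed
  finally show ?thesis .
qed

lemma flow_identity:
  "(\<Sum>n<R. \<Sum>p\<in>Lv n. ft g n p) = g (0,0,0) - mu R * (\<Sum>p\<in>Lv R. g p)"
proof (induction R)
  case 0 then show ?case by (simp add: Lv_0 mu_def)
next
  case (Suc R) then show ?case by (simp add: ft_level)
qed

lemma mu_card: "mu R * real (card (Lv R)) = 1"
  using flow_identity[where R=R and g="\<lambda>_. 1"] by (simp add: ft_def)

lemma mu_tel: "mu n = 2 / (real n + 1) - 2 / (real (Suc n) + 1)"
  by (simp add: mu_def field_simps)

lemma mu_sum: "(\<Sum>n<R. mu n) = 2 - 2 / (real R + 1)"
proof (induction R)
  case 0 then show ?case by simp
next
  case (Suc R)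
  have "(\<Sum>n<Suc R. mu n) = (2 - 2 / (real R + 1)) + mu R" using Suc by simp
  also have "\<dots> = 2 - 2 / (real (Suc R) + 1)" by (simp add: mu_tel)
  finally show ?case .
qed


section \<open>Dirichlet identity for finitely supported functions\<close>

lemma restrict_nbrs:
  assumes "finite T" "\<And>y. y \<in> nbrs x \<Longrightarrow> y \<notin> T \<Longrightarrow> H y = 0"
  shows "(\<Sum>y\<in>nbrs x. H y) = (\<Sum>y\<in>T. if y \<in> nbrs x then H y else 0)"
proof -
  have "(\<Sum>y\<in>nbrs x. H y) = (\<Sum>y\<in>nbrs x \<inter> T. H y)"
    by (rule sum.mono_neutral_right) (use finite_nbrs assms(2) in auto)
  also have "\<dots> = (\<Sum>y\<in>T. if y \<in> nbrs x then H y else 0)"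
    using sum.inter_restrict[OF assms(1), of H "nbrs x"] by (simp add: Int_commute)
  finally show ?thesis .
qed

lemma dirichlet:
  fixes f :: "int^'n::finite \<Rightarrow> real"
  assumes supp: "\<And>x. x \<notin> box N \<Longrightarrow> f x = 0" and NM: "N < M"
  shows "(\<Sum>x\<in>box M. \<Sum>y\<in>nbrs x. (f x - f y)^2) = 2 * (\<Sum>x\<in>box M. f x * lap f x)"
proof -
  define T where "T = (box M :: (int^'n) set)"
  have fT: "finite T" unfolding T_def by (rule finite_boxn)
  have out: "f x = 0 \<and> f y = 0" if "y \<in> nbrs x" "y \<notin> T" for x y
  proof -
    have "box (Suc N) \<subseteq> T" "box N \<subseteq> T" unfolding T_def using NM by (auto intro!: box_mono)
    then have "x \<notin> box N" "y \<notin> box N" using that box_nbrs by blast+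
    then show ?thesis using supp by simp
  qed
  define A where "A x y = (if y \<in> nbrs x then f x * (f x - f y) else 0)" for x y
  define B where "B x y = (if y \<in> nbrs x then (f x - f y)^2 else 0)" for x y
  have L: "(\<Sum>x\<in>T. f x * lap f x) = (\<Sum>x\<in>T. \<Sum>y\<in>T. A x y)"
  proof (rule sum.cong[OF refl])
    fix x assume "x \<in> T"
    have "f x * lap f x = (\<Sum>y\<in>nbrs x. f x * (f x - f y))" by (simp add: lap_def sum_distrib_left)
    also have "\<dots> = (\<Sum>y\<in>T. A x y)" unfolding A_def by (rule restrict_nbrs[OF fT]) (use out in auto)
    finally show "f x * lap f x = (\<Sum>y\<in>T. A x y)" .
  qed
  have R: "(\<Sum>x\<in>T. \<Sum>y\<in>nbrs x. (f x - f y)^2) = (\<Sum>x\<in>T. \<Sum>y\<in>T. B x y)"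
  proof (rule sum.cong[OF refl])
    fix x assume "x \<in> T"
    show "(\<Sum>y\<in>nbrs x. (f x - f y)^2) = (\<Sum>y\<in>T. B x y)"
      unfolding B_def by (rule restrict_nbrs[OF fT]) (use out in auto)
  qed
  have sw: "(\<Sum>x\<in>T. \<Sum>y\<in>T. A x y) = (\<Sum>x\<in>T. \<Sum>y\<in>T. A y x)"
    by (rule sum.swap)
  have "(\<Sum>x\<in>T. \<Sum>y\<in>T. B x y) = (\<Sum>x\<in>T. \<Sum>y\<in>T. A x y + A y x)"
  proof (intro sum.cong refl)
    fix x y
    show "B x y = A x y + A y x"
      unfolding A_def B_def using nbrs_sym[of y x] by (simp add: power2_eq_square algebra_simps)
  qed
  also have "\<dots> = (\<Sum>x\<in>T. \<Sum>y\<in>T. A x y) + (\<Sum>x\<in>T. \<Sum>y\<in>T. A y x)"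
    by (simp add: sum.distrib)
  finally have "(\<Sum>x\<in>T. \<Sum>y\<in>T. B x y) = 2 * (\<Sum>x\<in>T. \<Sum>y\<in>T. A x y)" using sw by simp
  then show ?thesis using L R unfolding T_def by simp
qed


section \<open>Truncated resolvent and the uniform bound\<close>

definition fN :: "real \<Rightarrow> nat \<Rightarrow> int^'n::finite \<Rightarrow> real" where
  "fN \<alpha> N x = (\<Sum>n<N. co (real (card (nbrs (0::int^'n)))) \<alpha> n * pw n x)"

lemma fN_nonneg: "\<alpha> \<ge> 0 \<Longrightarrow> fN \<alpha> N (x::int^'n::finite) \<ge> 0"
  unfolding fN_def using co_nonneg[OF cpos[where 'n='n]] pw_nonneg
  by (intro sum_nonneg mult_nonneg_nonneg) auto

lemma fN_supp: "x \<notin> box N \<Longrightarrow> fN \<alpha> N (x::int^'n::finite) = 0"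
  unfolding fN_def
proof (intro sum.neutral ballI)
  fix n assume "x \<notin> box N" "n \<in> {..<N}"
  then have "x \<notin> box n" using box_mono[of n N] by auto
  then have "pw n x = 0" using pw_support by blast
  then show "co (real (card (nbrs (0::int^'n)))) \<alpha> n * pw n x = 0" by simp
qed

lemma fN_eq:
  assumes a: "\<alpha> \<ge> 0"
  shows "lap (fN \<alpha> N) (x::int^'n::finite) + \<alpha> * fN \<alpha> N x
     = pw 0 x - (real (card (nbrs (0::int^'n))) + \<alpha>) * co (real (card (nbrs (0::int^'n)))) \<alpha> N * pw N x"
proof -
  define c where "c = real (card (nbrs (0::int^'n)))"
  have c: "c > 0" unfolding c_def by (rule cpos)
  have S: "(\<Sum>y\<in>nbrs x. fN \<alpha> N y) = (\<Sum>n<N. (c + \<alpha>) * (co c \<alpha> (Suc n) * pw (Suc n) x))"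
  proof -
    have "(\<Sum>y\<in>nbrs x. fN \<alpha> N y) = (\<Sum>n<N. \<Sum>y\<in>nbrs x. co c \<alpha> n * pw n y)"
      unfolding fN_def c_def[symmetric] by (rule sum.swap)
    also have "\<dots> = (\<Sum>n<N. (c + \<alpha>) * (co c \<alpha> (Suc n) * pw (Suc n) x))"
    proof (rule sum.cong[OF refl])
      fix n
      have "(\<Sum>y\<in>nbrs x. co c \<alpha> n * pw n y) = co c \<alpha> n * (\<Sum>y\<in>nbrs x. pw n y)"
        by (simp add: sum_distrib_left)
      also have "(\<Sum>y\<in>nbrs x. pw n y) = c * pw (Suc n) x" using c by (simp add: c_def)
      also have "co c \<alpha> n * (c * pw (Suc n) x) = (c * co c \<alpha> n) * pw (Suc n) x" by simp
      also have "\<dots> = (c + \<alpha>) * (co c \<alpha> (Suc n) * pw (Suc n) x)" using co_step[OF c a, of n] by simp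
      finally show "(\<Sum>y\<in>nbrs x. co c \<alpha> n * pw n y) = (c + \<alpha>) * (co c \<alpha> (Suc n) * pw (Suc n) x)" .
    qed
    finally show ?thesis .
  qed
  have "lap (fN \<alpha> N) x + \<alpha> * fN \<alpha> N x = (c + \<alpha>) * fN \<alpha> N x - (\<Sum>y\<in>nbrs x. fN \<alpha> N y)"
    by (simp add: lap_eq c_def algebra_simps)
  also have "\<dots> = (c + \<alpha>) * (\<Sum>n<N. co c \<alpha> n * pw n x) - (\<Sum>n<N. (c + \<alpha>) * (co c \<alpha> (Suc n) * pw (Suc n) x))"
    unfolding S unfolding fN_def c_def[symmetric] by (rule refl)
  also have "\<dots> = (c + \<alpha>) * (\<Sum>n<N. co c \<alpha> n * pw n x - co c \<alpha> (Suc n) * pw (Suc n) x)"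
    by (simp only: sum_distrib_left[symmetric] right_diff_distrib sum_subtractf)
  also have "\<dots> = (c + \<alpha>) * (co c \<alpha> 0 * pw 0 x - co c \<alpha> N * pw N x)"
    by (subst sum_lessThan_telescope'[where f="\<lambda>n. co c \<alpha> n * pw n x"]) simp
  also have "\<dots> = pw 0 x - (c + \<alpha>) * co c \<alpha> N * pw N x"
    using c a by (simp add: co_def algebra_simps)
  finally show ?thesis unfolding c_def .
qed

lemma fN_energy:
  assumes a: "\<alpha> \<ge> 0" and NM: "N < M"
  shows "(\<Sum>x\<in>(box M :: (int^'n::finite) set). \<Sum>y\<in>nbrs x. (fN \<alpha> N x - fN \<alpha> N y)^2) \<le> 2 * fN \<alpha> N (0::int^'n)"
proof -
  define f where "f = (fN \<alpha> N :: int^'n \<Rightarrow> real)"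
  define r where "r x = (real (card (nbrs (0::int^'n))) + \<alpha>) * co (real (card (nbrs (0::int^'n)))) \<alpha> N * pw N x" for x :: "int^'n"
  have r: "r x \<ge> 0" for x unfolding r_def using cpos[where 'n='n] a co_nonneg[OF cpos[where 'n='n] a] pw_nonneg
    by (intro mult_nonneg_nonneg) auto
  have fnn: "f x \<ge> 0" for x unfolding f_def using fN_nonneg[OF a] .
  have "(\<Sum>x\<in>box M. \<Sum>y\<in>nbrs x. (f x - f y)^2) = 2 * (\<Sum>x\<in>box M. f x * lap f x)"
    by (rule dirichlet[OF _ NM]) (simp add: f_def fN_supp)
  also have "(\<Sum>x\<in>box M. f x * lap f x) = (\<Sum>x\<in>box M. f x * pw 0 x - (f x * r x + \<alpha> * (f x)^2))"
  proof (rule sum.cong[OF refl])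
    fix x
    have "lap f x = pw 0 x - r x - \<alpha> * f x" using fN_eq[OF a, of N x] unfolding f_def r_def by linarith
    then have "f x * lap f x = f x * (pw 0 x - r x - \<alpha> * f x)" by (rule arg_cong)
    then show "f x * lap f x = f x * pw 0 x - (f x * r x + \<alpha> * (f x)^2)"
      by (simp add: right_diff_distrib power2_eq_square del: pw.simps)
  qed
  also have "\<dots> \<le> (\<Sum>x\<in>box M. f x * pw 0 x)"
  proof (rule sum_mono)
    fix x
    have "f x * r x \<ge> 0" "\<alpha> * (f x)^2 \<ge> 0" using fnn[of x] r[of x] a by simp_all
    then show "f x * pw 0 x - (f x * r x + \<alpha> * (f x)^2) \<le> f x * pw 0 x" by linarith
  qed
  also have "(\<Sum>x\<in>box M. f x * pw 0 x) = f 0"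
  proof -
    have "(0::int^'n) \<in> box M" by (simp add: box_def)
    moreover have "(\<Sum>x\<in>box M. f x * pw 0 x) = (\<Sum>x\<in>box M. if x = 0 then f x else 0)"
      by (intro sum.cong) auto
    ultimately show ?thesis by (simp add: sum.delta finite_boxn)
  qed
  finally show ?thesis unfolding f_def by simp
qed


lemma three_distinct:
  assumes "CARD('n::finite) \<ge> 3"
  shows "\<exists>a b d::'n. a \<noteq> b \<and> a \<noteq> d \<and> b \<noteq> d"
proof -
  obtain T :: "'n set" where T: "T \<subseteq> UNIV" "card T = 3" "finite T"
    by (rule obtain_subset_with_card_n[OF assms])
  have "\<exists>x y z. T = {x,y,z} \<and> x \<noteq> y \<and> y \<noteq> z \<and> x \<noteq> z"
    by (rule card_3_iff[THEN iffD1, OF T(2)])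
  then obtain x y z where "T = {x,y,z}" "x \<noteq> y" "y \<noteq> z" "x \<noteq> z" by (elim exE conjE)
  then have "x \<noteq> y \<and> x \<noteq> z \<and> y \<noteq> z" by simp
  then show ?thesis by (intro exI)
qed

definition emb :: "'n \<Rightarrow> 'n \<Rightarrow> 'n \<Rightarrow> nat\<times>nat\<times>nat \<Rightarrow> int^'n::finite" where
  "emb a b d p = (case p of (i,j,k) \<Rightarrow> (\<chi> t. if t = a then int i else if t = b then int j else if t = d then int k else 0))"

context
  fixes a b d :: "'n::finite"
  assumes ab: "a \<noteq> b" and ad: "a \<noteq> d" and bd: "b \<noteq> d"
begin

lemma emb_a: "emb a b d (i,j,k) $ a = int i" by (simp add: emb_def)
lemma emb_b: "emb a b d (i,j,k) $ b = int j" using ab by (simp add: emb_def)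
lemma emb_d: "emb a b d (i,j,k) $ d = int k" using ad bd by (simp add: emb_def)

lemma emb_S1: "emb a b d (Suc i,j,k) = emb a b d (i,j,k) + uvec a"
  using ab ad bd by (simp add: emb_def uvec_def vec_eq_iff)
lemma emb_S2: "emb a b d (i,Suc j,k) = emb a b d (i,j,k) + uvec b"
  using ab ad bd by (simp add: emb_def uvec_def vec_eq_iff)
lemma emb_S3: "emb a b d (i,j,Suc k) = emb a b d (i,j,k) + uvec d"
  using ab ad bd by (simp add: emb_def uvec_def vec_eq_iff)

lemma emb_0: "emb a b d (0,0,0) = 0"
  by (simp add: emb_def vec_eq_iff)

lemma emb_inj: "inj (emb a b d)"
proof (rule injI)
  fix p q assume e: "emb a b d p = emb a b d q"
  obtain i j k where p: "p = (i,j,k)" by (cases p) auto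
  obtain i' j' k' where q: "q = (i',j',k')" by (cases q) auto
  have "int i = int i'" "int j = int j'" "int k = int k'"
    using arg_cong[OF e, of "\<lambda>v. v$a"] arg_cong[OF e, of "\<lambda>v. v$b"] arg_cong[OF e, of "\<lambda>v. v$d"]
    unfolding p q emb_a emb_b emb_d by simp_all
  then show "p = q" using p q by simp
qed

lemma emb_box: "(i,j,k) \<in> Lv n \<Longrightarrow> emb a b d (i,j,k) \<in> box n"
  by (auto simp: emb_def box_def Lv_def)

lemma emb_in_box: "emb a b d (i,j,k) \<in> box N \<Longrightarrow> i \<le> N \<and> j \<le> N \<and> k \<le> N"
  unfolding box_def using emb_a[of i j k] emb_b[of i j k] emb_d[of i j k]
  by (metis (mono_tags, lifting) atLeastAtMost_iff mem_Collect_eq of_nat_le_iff)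

lemma uvec_ne: "uvec a \<noteq> uvec b" "uvec a \<noteq> uvec d" "uvec b \<noteq> uvec d"
  using ab ad bd by (auto simp: uvec_def vec_eq_iff)

end

definition dsq :: "(nat\<times>nat\<times>nat \<Rightarrow> real) \<Rightarrow> nat\<times>nat\<times>nat \<Rightarrow> real" where
  "dsq g = (\<lambda>(i,j,k). (g (i,j,k) - g (Suc i,j,k))^2 + (g (i,j,k) - g (i,Suc j,k))^2 + (g (i,j,k) - g (i,j,Suc k))^2)"

lemma amgm: "(K::real) * w * D \<le> (K * w)^2 + D^2 / 4"
proof -
  have "0 \<le> (K * w - D / 2)^2" by simp
  also have "(K * w - D / 2)^2 = (K * w)^2 - K * w * D + D^2 / 4"
    by (simp add: power2_diff power_divide algebra_simps)
  finally show ?thesis by simp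
qed

lemma ft_bound:
  assumes "p \<in> Lv n"
  shows "ft g n p \<le> (mu n)^2 + dsq g p / 4"
proof -
  obtain i j k where p: "p = (i,j,k)" by (cases p) auto
  have s: "(real i + 1) + (real j + 1) + (real k + 1) = real n + 3" using assms p by (auto simp: Lv_def)
  define K where "K = mu n / (real n + 3)"
  define D1 where "D1 = g (i,j,k) - g (Suc i,j,k)"
  define D2 where "D2 = g (i,j,k) - g (i,Suc j,k)"
  define D3 where "D3 = g (i,j,k) - g (i,j,Suc k)"
  have ft: "ft g n p = K * (real i + 1) * D1 + K * (real j + 1) * D2 + K * (real k + 1) * D3"
    unfolding p ft_def K_def[symmetric] D1_def[symmetric] D2_def[symmetric] D3_def[symmetric] prod.case
    by (simp add: algebra_simps)
  have ds: "dsq g p = D1^2 + D2^2 + D3^2" unfolding p dsq_def D1_def D2_def D3_def by simp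
  have sq: "(K * (real i + 1))^2 + (K * (real j + 1))^2 + (K * (real k + 1))^2 \<le> (mu n)^2"
  proof -
    have "(K * (real i + 1))^2 + (K * (real j + 1))^2 + (K * (real k + 1))^2
        = K^2 * ((real i + 1)^2 + (real j + 1)^2 + (real k + 1)^2)" by (simp only: power_mult_distrib) (simp only: distrib_left)
    also have "\<dots> \<le> K^2 * ((real i + 1) + (real j + 1) + (real k + 1))^2"
    proof (rule mult_left_mono)
      have "0 \<le> (real i + 1) * (real j + 1)" "0 \<le> (real i + 1) * (real k + 1)" "0 \<le> (real j + 1) * (real k + 1)"
        by simp_all
      then show "(real i + 1)^2 + (real j + 1)^2 + (real k + 1)^2 \<le> ((real i + 1) + (real j + 1) + (real k + 1))^2"
        by (simp add: power2_eq_square algebra_simps)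
    qed simp
    also have "\<dots> = (K * (real n + 3))^2" using s by (simp add: power_mult_distrib)
    also have "K * (real n + 3) = mu n" unfolding K_def by simp
    finally show ?thesis .
  qed
  have "ft g n p \<le> ((K * (real i + 1))^2 + D1^2/4) + ((K * (real j + 1))^2 + D2^2/4) + ((K * (real k + 1))^2 + D3^2/4)"
    unfolding ft using amgm[of K "real i + 1" D1] amgm[of K "real j + 1" D2] amgm[of K "real k + 1" D3] by linarith
  then show ?thesis using sq unfolding ds by (simp add: add_divide_distrib)
qed


lemma dsq_le_E:
  fixes f :: "int^'n::finite \<Rightarrow> real"
  assumes ab: "a \<noteq> b" and ad: "a \<noteq> d" and bd: "b \<noteq> d"
  shows "dsq (\<lambda>p. f (emb a b d p)) p \<le> (\<Sum>y\<in>nbrs (emb a b d p). (f (emb a b d p) - f y)^2)"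
proof -
  obtain i j k where p: "p = (i,j,k)" by (cases p) auto
  define x where "x = emb a b d (i,j,k)"
  have e1: "emb a b d (Suc i,j,k) = x + uvec a" unfolding x_def by (rule emb_S1[OF ab ad bd])
  have e2: "emb a b d (i,Suc j,k) = x + uvec b" unfolding x_def by (rule emb_S2[OF ab ad bd])
  have e3: "emb a b d (i,j,Suc k) = x + uvec d" unfolding x_def by (rule emb_S3[OF ab ad bd])
  have sub: "{x + uvec a, x + uvec b, x + uvec d} \<subseteq> nbrs x"
    using nbrs_shift[of "x + uvec a" x] uvec_nbrs[of a] nbrs_shift[of "x + uvec b" x] uvec_nbrs[of b]
      nbrs_shift[of "x + uvec d" x] uvec_nbrs[of d] by simp
  have ne: "x + uvec a \<noteq> x + uvec b" "x + uvec a \<noteq> x + uvec d" "x + uvec b \<noteq> x + uvec d"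
    using uvec_ne[OF ab ad bd] by auto
  have "dsq (\<lambda>p. f (emb a b d p)) p = (\<Sum>y\<in>{x + uvec a, x + uvec b, x + uvec d}. (f x - f y)^2)"
    unfolding p dsq_def using ne by (simp add: e1 e2 e3 x_def[symmetric] add.assoc)
  also have "\<dots> \<le> (\<Sum>y\<in>nbrs x. (f x - f y)^2)"
    by (rule sum_mono2[OF finite_nbrs sub]) simp
  finally show ?thesis unfolding p x_def .
qed

lemma fN_le4:
  assumes card: "CARD('n::finite) \<ge> 3" and a: "\<alpha> \<ge> 0"
  shows "fN \<alpha> N (0::int^'n) \<le> 4"
proof -
  obtain a b d :: 'n where ab: "a \<noteq> b" and ad: "a \<noteq> d" and bd: "b \<noteq> d"
    using three_distinct[OF card] by blast
  define e where "e = emb a b d"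
  define f where "f = (fN \<alpha> N :: int^'n \<Rightarrow> real)"
  define g where "g p = f (e p)" for p
  define R where "R = 3 * N + 1"
  define E where "E x = (\<Sum>y\<in>nbrs x. (f x - f y)^2)" for x
  have Enn: "E x \<ge> 0" for x unfolding E_def by (intro sum_nonneg) auto
  have bnd: "(\<Sum>p\<in>Lv R. g p) = 0"
  proof (rule sum.neutral, rule ballI)
    fix p assume pL: "p \<in> Lv R"
    obtain i j k where p: "p = (i,j,k)" by (cases p) auto
    have "e p \<notin> box N"
    proof
      assume "e p \<in> box N"
      then have "i \<le> N \<and> j \<le> N \<and> k \<le> N" unfolding p e_def by (rule emb_in_box[OF ab ad bd])
      moreover have "i + j + k = R" using pL p by (simp add: Lv_def)
      ultimately show False unfolding R_def by linarith
    qed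
    then show "g p = 0" unfolding g_def f_def by (rule fN_supp)
  qed
  have "f 0 = (\<Sum>n<R. \<Sum>p\<in>Lv n. ft g n p)"
    using flow_identity[where R=R and g=g] bnd emb_0[OF ab ad bd] by (simp add: g_def e_def)
  also have "\<dots> \<le> (\<Sum>n<R. \<Sum>p\<in>Lv n. (mu n)^2 + dsq g p / 4)"
    by (intro sum_mono ft_bound)
  also have "\<dots> = (\<Sum>n<R. mu n) + (\<Sum>n<R. \<Sum>p\<in>Lv n. dsq g p) / 4"
  proof -
    have "(\<Sum>p\<in>Lv n. (mu n)^2 + dsq g p / 4) = mu n + (\<Sum>p\<in>Lv n. dsq g p) / 4" for n
    proof -
      have "(\<Sum>p\<in>Lv n. (mu n)^2) = mu n * (mu n * real (card (Lv n)))"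
        by (simp add: power2_eq_square)
      also have "\<dots> = mu n" using mu_card[of n] by simp
      finally show ?thesis by (simp add: sum.distrib sum_divide_distrib)
    qed
    then show ?thesis by (simp add: sum.distrib sum_divide_distrib)
  qed
  also have "(\<Sum>n<R. mu n) \<le> 2" using mu_sum[of R] by simp
  also have "(\<Sum>n<R. \<Sum>p\<in>Lv n. dsq g p) \<le> (\<Sum>n<R. \<Sum>p\<in>Lv n. E (e p))"
    unfolding g_def E_def e_def by (intro sum_mono dsq_le_E[OF ab ad bd])
  also have "(\<Sum>n<R. \<Sum>p\<in>Lv n. E (e p)) = (\<Sum>p\<in>(\<Union>n\<in>{..<R}. Lv n). E (e p))"
    by (rule sum.UNION_disjoint[symmetric]) (simp_all add: finite_Lv, auto simp: Lv_def)
  also have "\<dots> = (\<Sum>x\<in>e ` (\<Union>n\<in>{..<R}. Lv n). E x)"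
  proof -
    have "inj_on e (\<Union>n\<in>{..<R}. Lv n)" using emb_inj[OF ab ad bd] unfolding e_def by (rule inj_on_subset) simp
    then show ?thesis by (simp add: sum.reindex)
  qed
  also have "\<dots> \<le> (\<Sum>x\<in>box R. E x)"
  proof (rule sum_mono2[OF finite_boxn])
    show "e ` (\<Union>n\<in>{..<R}. Lv n) \<subseteq> box R"
    proof
      fix x assume "x \<in> e ` (\<Union>n\<in>{..<R}. Lv n)"
      then obtain n p where np: "n < R" "p \<in> Lv n" "x = e p" by auto
      obtain i j k where p: "p = (i,j,k)" by (cases p) auto
      have "x \<in> box n" using emb_box[OF ab ad bd] np p unfolding e_def by simp
      then show "x \<in> box R" using box_mono[of n R] np by auto
    qed
  qed (use Enn in auto)
  also have "(\<Sum>x\<in>box R. E x) \<le> 2 * f 0"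
    unfolding E_def f_def by (rule fN_energy[OF a]) (simp add: R_def)
  finally have "f 0 \<le> 2 + 2 * f 0 / 4" by simp
  then show ?thesis unfolding f_def by simp
qed


section \<open>Green's function\<close>

lemma res_le_res0:
  assumes a: "\<alpha> > 0"
  shows "res \<alpha> (x::int^'n::finite) \<le> res \<alpha> (0::int^'n)"
proof (rule ccontr)
  assume "\<not> res \<alpha> x \<le> res \<alpha> (0::int^'n)"
  then have gt: "res \<alpha> x > res \<alpha> (0::int^'n)" by simp
  then have pos: "res \<alpha> x > 0" using res_nonneg[OF a, of "0::int^'n"] by linarith
  have fin: "finite {z\<in>UNIV. res \<alpha> z \<ge> \<epsilon>}" if "\<epsilon> > 0" for \<epsilon>
    by (rule l2_fin_UNIV[OF res_l2[OF a] that])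
  obtain z0 :: "int^'n" where z0': "z0 \<in> UNIV" "res \<alpha> z0 > 0" "\<And>z::int^'n. z \<in> UNIV \<Longrightarrow> res \<alpha> z \<le> res \<alpha> z0"
    by (rule mp_max[OF fin _ pos]) auto
  then have z0: "res \<alpha> z0 > 0" "\<And>z::int^'n. res \<alpha> z \<le> res \<alpha> z0" by auto
  show False
  proof (cases "z0 = 0")
    case True then show False using z0(2)[of x] gt by simp
  next
    case False
    have "lap (res \<alpha>) z0 \<ge> 0" using z0 by (intro lap_max_nonneg) auto
    then have "lap (res \<alpha>) z0 + \<alpha> * res \<alpha> z0 > 0" using z0 a by (simp add: add_nonneg_pos)
    then show False using res_eq[OF a, of z0] False by simp
  qed
qed

lemma fN_le_res: "\<alpha> > 0 \<Longrightarrow> fN \<alpha> N x \<le> res \<alpha> (x::int^'n::finite)"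
  unfolding fN_def res_def
  by (rule sum_le_suminf[OF res_summable]) (auto intro!: mult_nonneg_nonneg co_nonneg cpos pw_nonneg)

lemma res_le4:
  assumes card: "CARD('n::finite) \<ge> 3" and a: "\<alpha> > 0"
  shows "res \<alpha> (x::int^'n) \<le> 4"
proof -
  have "res \<alpha> (0::int^'n) \<le> 4"
    unfolding res_def
  proof (rule suminf_le_const[OF res_summable[OF a]])
    fix N show "(\<Sum>n<N. co (real (card (nbrs (0::int^'n)))) \<alpha> n * pw n (0::int^'n)) \<le> 4"
      using fN_le4[OF card, of \<alpha> N] a unfolding fN_def by simp
  qed
  then show ?thesis using res_le_res0[OF a, of x] by simp
qed

lemma fN_tendsto: "((\<lambda>\<alpha>. fN \<alpha> N (x::int^'n::finite)) \<longlongrightarrow> fN 0 N x) (at_right 0)"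
  unfolding fN_def co_def using cpos[where 'n='n]
  by (intro tendsto_intros) auto

lemma fN0_le4:
  assumes card: "CARD('n::finite) \<ge> 3"
  shows "fN 0 N (x::int^'n) \<le> 4"
proof (rule tendsto_upperbound[OF fN_tendsto])
  show "\<forall>\<^sub>F \<alpha> in at_right 0. fN \<alpha> N x \<le> 4"
    using eventually_at_right_less[of "0::real"]
  proof (rule eventually_mono)
    fix \<alpha> :: real assume "0 < \<alpha>"
    then show "fN \<alpha> N x \<le> 4" using fN_le_res[of \<alpha> N x] res_le4[OF card, of \<alpha> x] by linarith
  qed
qed simp

definition Gf :: "int^'n::finite \<Rightarrow> real" where
  "Gf x = (\<Sum>n. co (real (card (nbrs (0::int^'n)))) 0 n * pw n x)"

lemma co_mono: "c > 0 \<Longrightarrow> \<alpha> \<ge> 0 \<Longrightarrow> co c \<alpha> n \<le> co c 0 n"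
  unfolding co_def by (intro divide_left_mono power_mono mult_pos_pos) auto

lemma Gf_summable:
  assumes card: "CARD('n::finite) \<ge> 3"
  shows "summable (\<lambda>n. co (real (card (nbrs (0::int^'n)))) 0 n * pw n (x::int^'n))"
proof (rule summableI_nonneg_bounded)
  fix n show "0 \<le> co (real (card (nbrs (0::int^'n)))) 0 n * pw n x"
    using cpos[where 'n='n] by (intro mult_nonneg_nonneg co_nonneg pw_nonneg) auto
  show "(\<Sum>i<n. co (real (card (nbrs (0::int^'n)))) 0 i * pw i x) \<le> 4"
    using fN0_le4[OF card, of n x] unfolding fN_def .
qed

lemma res_tendsto:
  assumes card: "CARD('n::finite) \<ge> 3"
  shows "((\<lambda>\<alpha>. resolvent0 \<alpha> (x::int^'n)) \<longlongrightarrow> Gf x) (at_right 0)"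
proof -
  define c where "c = real (card (nbrs (0::int^'n)))"
  have c: "c > 0" unfolding c_def by (rule cpos)
  define \<Phi> where "\<Phi> \<alpha> = (\<Sum>n. co c \<alpha> n * pw n x)" for \<alpha>
  have M: "summable (\<lambda>n. co c 0 n * pw n x)" unfolding c_def by (rule Gf_summable[OF card])
  have ul: "uniform_limit {0..1} (\<lambda>N \<alpha>. \<Sum>n<N. co c \<alpha> n * pw n x) \<Phi> sequentially"
    unfolding \<Phi>_def
  proof (rule Weierstrass_m_test[OF _ M])
    fix n and \<alpha> :: real assume "\<alpha> \<in> {0..1}"
    then have a: "\<alpha> \<ge> 0" by simp
    show "norm (co c \<alpha> n * pw n x) \<le> co c 0 n * pw n x"
      using co_nonneg[OF c a, of n] co_mono[OF c a, of n] pw_nonneg[of n x]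
      by (simp add: abs_mult mult_right_mono)
  qed
  have cont: "continuous_on {0..1} \<Phi>"
  proof (rule uniform_limit_theorem[OF _ ul])
    show "\<forall>\<^sub>F N in sequentially. continuous_on {0..1} (\<lambda>\<alpha>. \<Sum>n<N. co c \<alpha> n * pw n x)"
      unfolding co_def using c by (intro always_eventually allI continuous_intros) auto
  qed simp
  have t: "(\<Phi> \<longlongrightarrow> \<Phi> 0) (at_right 0)" by (rule continuous_on_Icc_at_rightD[OF cont]) simp
  have "\<Phi> 0 = Gf x" unfolding \<Phi>_def Gf_def c_def ..
  moreover have "\<forall>\<^sub>F \<alpha> in at_right 0. \<Phi> \<alpha> = resolvent0 \<alpha> x"
    using eventually_at_right_less[of "0::real"]
    by (rule eventually_mono) (simp add: resolvent0_eq res_def \<Phi>_def c_def)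
  ultimately show ?thesis using t by (simp add: tendsto_cong)
qed

lemma green0_eq:
  assumes card: "CARD('n::finite) \<ge> 3"
  shows "green0 (x::int^'n) = Gf x"
  unfolding green0_def using res_tendsto[OF card] by (rule tendsto_Lim[rotated]) simp

lemma Gf_lap:
  assumes card: "CARD('n::finite) \<ge> 3"
  shows "lap Gf (x::int^'n) = (if x = 0 then 1 else 0)"
proof -
  have t: "((\<lambda>\<alpha>. lap (resolvent0 \<alpha>) x + \<alpha> * resolvent0 \<alpha> x) \<longlongrightarrow> lap Gf x + 0 * Gf x) (at_right 0)"
    unfolding lap_def by (intro tendsto_intros res_tendsto[OF card])
  have "\<forall>\<^sub>F \<alpha> in at_right 0. lap (resolvent0 \<alpha>) x + \<alpha> * resolvent0 \<alpha> x = (if x = 0 then 1 else 0)"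
    using eventually_at_right_less[of "0::real"]
    by (rule eventually_mono) (simp add: resolvent0_eq res_eq)
  then have "((\<lambda>\<alpha>. lap (resolvent0 \<alpha>) x + \<alpha> * resolvent0 \<alpha> x) \<longlongrightarrow> (if x = 0 then 1 else 0)) (at_right 0)"
    by (rule tendsto_eventually)
  from tendsto_unique[OF _ t this] show ?thesis by simp
qed


section \<open>Reflections\<close>

lemma lap_comp:
  assumes inv: "\<And>z. Rf (Rf z) = z" and nb: "\<And>z. nbrs (Rf z) = Rf ` nbrs z"
  shows "lap (\<lambda>z. f (Rf z)) z = lap f (Rf z)"
proof -
  have inj: "inj_on Rf A" for A by (metis inv inj_onI)
  have "lap f (Rf z) = (\<Sum>y\<in>Rf ` nbrs z. f (Rf z) - f y)" unfolding lap_def nb ..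
  also have "\<dots> = (\<Sum>w\<in>nbrs z. f (Rf z) - f (Rf w))" by (simp add: sum.reindex[OF inj])
  finally show ?thesis unfolding lap_def by simp
qed

lemma refl_mono_res:
  fixes Rf :: "int^'n::finite \<Rightarrow> int^'n" and S :: "(int^'n) set"
  assumes a: "\<alpha> > 0"
    and inv: "\<And>z. Rf (Rf z) = z" and nb: "\<And>z. nbrs (Rf z) = Rf ` nbrs z"
    and S0: "0 \<in> S" and out: "\<And>z. z \<in> S \<Longrightarrow> Rf z \<notin> S"
    and cross: "\<And>z w. z \<in> S \<Longrightarrow> w \<in> nbrs z \<Longrightarrow> w \<notin> S \<Longrightarrow> w = Rf z"
    and zS: "z \<in> S"
  shows "res \<alpha> (Rf z) \<le> res \<alpha> z"
proof (rule ccontr)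
  define g where "g x = res \<alpha> (Rf x) - res \<alpha> x" for x
  assume "\<not> res \<alpha> (Rf z) \<le> res \<alpha> z"
  then have pos: "g z > 0" by (simp add: g_def)
  have inj: "inj Rf" by (metis inv injI)
  have fin: "finite {x\<in>S. g x \<ge> \<epsilon>}" if e: "\<epsilon> > 0" for \<epsilon>
  proof -
    have "{x\<in>S. g x \<ge> \<epsilon>} \<subseteq> Rf -` {y. res \<alpha> y \<ge> \<epsilon>}"
    proof
      fix x assume "x \<in> {x\<in>S. g x \<ge> \<epsilon>}"
      then have "\<epsilon> \<le> res \<alpha> (Rf x) - res \<alpha> x" by (simp add: g_def)
      then show "x \<in> Rf -` {y. res \<alpha> y \<ge> \<epsilon>}" using res_nonneg[OF a, of x] by simp
    qed
    moreover have "finite (Rf -` {y. res \<alpha> y \<ge> \<epsilon>})"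
      using l2_fin[OF res_l2[OF a] e] inj by (intro finite_vimageI) auto
    ultimately show ?thesis by (rule finite_subset)
  qed
  obtain z0 where z0: "z0 \<in> S" "g z0 > 0" "\<And>x. x \<in> S \<Longrightarrow> g x \<le> g z0"
    by (rule mp_max[OF fin zS pos]) auto
  have "lap g z0 \<ge> 0"
  proof (rule lap_max_nonneg)
    fix w assume w: "w \<in> nbrs z0"
    show "g w \<le> g z0"
    proof (cases "w \<in> S")
      case True then show ?thesis using z0 by simp
    next
      case False
      then have "w = Rf z0" using cross[OF z0(1) w] by simp
      then have "g w = - g z0" by (simp add: g_def inv)
      then show ?thesis using z0(2) by simp
    qed
  qed
  then have gt: "lap g z0 + \<alpha> * g z0 > 0" using z0(2) a by (simp add: add_nonneg_pos)
  have "lap g z0 = lap (res \<alpha>) (Rf z0) - lap (res \<alpha>) z0"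
  proof -
    have "lap g z0 = lap (\<lambda>x. res \<alpha> (Rf x)) z0 - lap (res \<alpha>) z0"
      unfolding lap_def g_def by (simp add: sum_subtractf[symmetric] algebra_simps)
    then show ?thesis using lap_comp[OF inv nb, of "res \<alpha>" z0] by simp
  qed
  then have "lap g z0 + \<alpha> * g z0 = (lap (res \<alpha>) (Rf z0) + \<alpha> * res \<alpha> (Rf z0)) - (lap (res \<alpha>) z0 + \<alpha> * res \<alpha> z0)"
    by (simp add: g_def algebra_simps)
  also have "\<dots> = (if Rf z0 = 0 then 1 else 0) - (if z0 = 0 then 1 else 0)" by (simp only: res_eq[OF a])
  also have "\<dots> \<le> 0" using out[OF z0(1)] S0 by auto
  finally show False using gt by simp
qed

lemma refl_mono_Gf:
  fixes Rf :: "int^'n::finite \<Rightarrow> int^'n" and S :: "(int^'n) set"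
  assumes card: "CARD('n) \<ge> 3"
    and inv: "\<And>z. Rf (Rf z) = z" and nb: "\<And>z. nbrs (Rf z) = Rf ` nbrs z"
    and S0: "0 \<in> S" and out: "\<And>z. z \<in> S \<Longrightarrow> Rf z \<notin> S"
    and cross: "\<And>z w. z \<in> S \<Longrightarrow> w \<in> nbrs z \<Longrightarrow> w \<notin> S \<Longrightarrow> w = Rf z"
    and zS: "z \<in> S"
  shows "Gf (Rf z) \<le> Gf z"
proof (rule tendsto_le[OF _ res_tendsto[OF card] res_tendsto[OF card]])
  show "\<forall>\<^sub>F \<alpha> in at_right 0. resolvent0 \<alpha> (Rf z) \<le> resolvent0 \<alpha> z"
    using eventually_at_right_less[of "0::real"]
  proof (rule eventually_mono)
    fix \<alpha> :: real assume a: "0 < \<alpha>"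
    show "resolvent0 \<alpha> (Rf z) \<le> resolvent0 \<alpha> z"
      using refl_mono_res[OF a inv nb S0 out cross zS] by (simp add: resolvent0_eq[OF a])
  qed
qed simp

definition l1 :: "int^'n::finite \<Rightarrow> nat" where
  "l1 z = (\<Sum>i\<in>UNIV. nat \<bar>z$i\<bar>)"

lemma propagate:
  fixes Rf :: "int^'n::finite \<Rightarrow> int^'n" and S :: "(int^'n) set"
  assumes card: "CARD('n) \<ge> 3"
    and inv: "\<And>z. Rf (Rf z) = z" and nb: "\<And>z. nbrs (Rf z) = Rf ` nbrs z"
    and S0: "0 \<in> S" and out: "\<And>z. z \<in> S \<Longrightarrow> Rf z \<notin> S"
    and cross: "\<And>z w. z \<in> S \<Longrightarrow> w \<in> nbrs z \<Longrightarrow> w \<notin> S \<Longrightarrow> w = Rf z"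
    and desc: "\<And>z. z \<in> S \<Longrightarrow> z \<noteq> 0 \<Longrightarrow> \<exists>w\<in>nbrs z. w \<in> S \<and> l1 w < l1 z"
  shows "z \<in> S \<Longrightarrow> Gf (Rf z) < Gf z"
proof (induction "l1 z" arbitrary: z rule: less_induct)
  case less
  define D where "D x = Gf x - Gf (Rf x)" for x
  have Dnn: "D x \<ge> 0" if "x \<in> S" for x
    using refl_mono_Gf[OF card inv nb S0 out cross that] by (simp add: D_def)
  show ?case
  proof (rule ccontr)
    assume "\<not> Gf (Rf z) < Gf z"
    then have Dz: "D z = 0" using Dnn[OF less.prems] by (simp add: D_def)
    have Dw: "D w \<ge> 0" if "w \<in> nbrs z" for w
    proof (cases "w \<in> S")
      case True then show ?thesis by (rule Dnn)
    next
      case False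
      then have "w = Rf z" using cross[OF less.prems that] by simp
      then show ?thesis using Dz by (simp add: D_def inv)
    qed
    have "lap D z = lap Gf z - lap Gf (Rf z)"
    proof -
      have "lap D z = lap Gf z - lap (\<lambda>x. Gf (Rf x)) z"
        unfolding lap_def D_def by (simp add: sum_subtractf[symmetric] algebra_simps)
      then show ?thesis using lap_comp[OF inv nb, of Gf z] by simp
    qed
    also have "\<dots> = (if z = 0 then 1 else 0)"
      using Gf_lap[OF card, of z] Gf_lap[OF card, of "Rf z"] out[OF less.prems] S0 by auto
    finally have L: "lap D z = (if z = 0 then 1 else 0)" .
    have "lap D z = - (\<Sum>w\<in>nbrs z. D w)" unfolding lap_def Dz by (simp add: sum_negf)
    moreover have "(\<Sum>w\<in>nbrs z. D w) \<ge> 0" using Dw by (intro sum_nonneg) auto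
    ultimately have z0: "z \<noteq> 0" and S: "(\<Sum>w\<in>nbrs z. D w) = 0" using L by (auto split: if_splits)
    obtain w where w: "w \<in> nbrs z" "w \<in> S" "l1 w < l1 z" using desc[OF less.prems z0] by blast
    have "D w = 0" using S Dw finite_nbrs sum_nonneg_eq_0_iff w(1) by blast
    moreover have "Gf (Rf w) < Gf w" using less.hyps[OF w(3) w(2)] .
    ultimately show False by (simp add: D_def)
  qed
qed


definition Rfl :: "'n \<Rightarrow> int \<Rightarrow> int \<Rightarrow> int^'n::finite \<Rightarrow> int^'n" where
  "Rfl i s k z = (\<chi> j. if j = i then s * (2 * k + 1) - z$j else z$j)"

lemma nbrs_iff_sq: "y \<in> nbrs x \<longleftrightarrow> (\<Sum>j\<in>UNIV. (y$j - x$j)^2) = 1"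
  by (simp add: nbrs_def)

lemma unit_diff:
  fixes w z :: "int^'n::finite"
  assumes "w \<in> nbrs z" "(w$i - z$i)^2 = 1" "j \<noteq> i"
  shows "w$j = z$j"
proof -
  have "(\<Sum>m\<in>UNIV. (w$m - z$m)^2) = 1" using assms(1) by (simp add: nbrs_def)
  moreover have "(\<Sum>m\<in>UNIV. (w$m - z$m)^2) = (w$i - z$i)^2 + (\<Sum>m\<in>UNIV - {i}. (w$m - z$m)^2)"
    by (rule sum.remove) auto
  ultimately have "(\<Sum>m\<in>UNIV - {i}. (w$m - z$m)^2) = 0" using assms(2) by simp
  then have "\<forall>m\<in>UNIV - {i}. (w$m - z$m)^2 = 0" by (subst sum_nonneg_eq_0_iff[symmetric]) auto
  then show ?thesis using assms(3) by auto
qed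

context
  fixes i :: "'n::finite" and s k :: int
  assumes s: "s = 1 \<or> s = -1" and k: "k \<ge> 0"
begin

lemma ss: "s * s = 1" using s by auto

lemma Rfl_i: "Rfl i s k z $ i = s * (2 * k + 1) - z$i" by (simp add: Rfl_def)
lemma Rfl_j: "j \<noteq> i \<Longrightarrow> Rfl i s k z $ j = z$j" by (simp add: Rfl_def)

lemma Rfl_inv: "Rfl i s k (Rfl i s k z) = z"
  by (simp add: Rfl_def vec_eq_iff)

lemma Rfl_nbrs_iff: "Rfl i s k y \<in> nbrs z \<longleftrightarrow> y \<in> nbrs (Rfl i s k z)"
proof -
  have "(\<Sum>j\<in>UNIV. ((Rfl i s k y)$j - z$j)^2) = (\<Sum>j\<in>UNIV. (y$j - (Rfl i s k z)$j)^2)"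
  proof (rule sum.cong[OF refl])
    fix j show "((Rfl i s k y)$j - z$j)^2 = (y$j - (Rfl i s k z)$j)^2"
    proof (cases "j = i")
      case True
      have e: "(Rfl i s k y)$i - z$i = - (y$i - (Rfl i s k z)$i)" by (simp add: Rfl_i)
      show ?thesis using True by (simp only: e power2_minus)
    next
      case False then show ?thesis by (simp add: Rfl_j)
    qed
  qed
  then show ?thesis by (simp add: nbrs_def)
qed

lemma Rfl_nb: "nbrs (Rfl i s k z) = Rfl i s k ` nbrs z"
proof
  show "nbrs (Rfl i s k z) \<subseteq> Rfl i s k ` nbrs z"
  proof
    fix y assume "y \<in> nbrs (Rfl i s k z)"
    then have "Rfl i s k y \<in> nbrs z" using Rfl_nbrs_iff by simp
    moreover have "y = Rfl i s k (Rfl i s k y)" by (simp add: Rfl_inv)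
    ultimately show "y \<in> Rfl i s k ` nbrs z" by blast
  qed
  show "Rfl i s k ` nbrs z \<subseteq> nbrs (Rfl i s k z)"
  proof
    fix y assume "y \<in> Rfl i s k ` nbrs z"
    then obtain w where w: "w \<in> nbrs z" "y = Rfl i s k w" by blast
    then show "y \<in> nbrs (Rfl i s k z)" using Rfl_nbrs_iff[of "Rfl i s k w" z] Rfl_inv by simp
  qed
qed

definition Sh :: "(int^'n) set" where "Sh = {z. s * z$i \<le> k}"

lemma Sh0: "0 \<in> Sh" using k by (simp add: Sh_def)

lemma Sh_out: "z \<in> Sh \<Longrightarrow> Rfl i s k z \<notin> Sh"
proof -
  assume "z \<in> Sh"
  then have "s * z$i \<le> k" by (simp add: Sh_def)
  moreover have "s * (Rfl i s k z)$i = 2 * k + 1 - s * z$i"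
    using ss by (simp add: Rfl_i right_diff_distrib mult.assoc[symmetric])
  ultimately show ?thesis by (simp add: Sh_def)
qed

lemma Sh_cross:
  assumes z: "z \<in> Sh" and w: "w \<in> nbrs z" and wS: "w \<notin> Sh"
  shows "w = Rfl i s k z"
proof -
  have a1: "s * z$i \<le> k" using z by (simp add: Sh_def)
  have a2: "s * w$i > k" using wS by (simp add: Sh_def)
  have a3: "\<bar>w$i - z$i\<bar> \<le> 1" by (rule nbrs_comp[OF w])
  have c: "w$i = z$i + s \<and> s * z$i = k"
    using s
  proof
    assume "s = 1" then show ?thesis using a1 a2 a3 by auto
  next
    assume "s = -1" then show ?thesis using a1 a2 a3 by auto
  qed
  have sq: "(w$i - z$i)^2 = 1" using c s by auto
  show ?thesis
  proof (subst vec_eq_iff, rule allI)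
    fix j show "w$j = Rfl i s k z $ j"
    proof (cases "j = i")
      case True
      have "Rfl i s k z $ i = z$i + s" using c s by (auto simp: Rfl_i)
      then show ?thesis using True c by simp
    next
      case False then show ?thesis using unit_diff[OF w sq False] by (simp add: Rfl_j)
    qed
  qed
qed

lemma Sh_desc:
  assumes z: "z \<in> Sh" and nz: "z \<noteq> 0"
  shows "\<exists>w\<in>nbrs z. w \<in> Sh \<and> l1 w < l1 z"
proof -
  obtain j where j: "z$j \<noteq> 0" using nz by (auto simp: vec_eq_iff)
  define t where "t = sgn (z$j)"
  have t: "t = 1 \<or> t = -1" using j by (auto simp: t_def sgn_if)
  define w where "w = (\<chi> m. if m = j then z$m - t else z$m)"
  have wj: "w$j = z$j - t" and wm: "\<And>m. m \<noteq> j \<Longrightarrow> w$m = z$m" by (simp_all add: w_def)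
  have "w \<in> nbrs z"
  proof -
    have "(\<Sum>m\<in>UNIV. (w$m - z$m)^2) = (\<Sum>m\<in>UNIV. if m = j then 1 else 0)"
      using t by (intro sum.cong) (auto simp: w_def)
    then show ?thesis by (simp add: nbrs_def)
  qed
  moreover have "w \<in> Sh"
  proof (cases "j = i")
    case False then show ?thesis using z wm[of i] by (simp add: Sh_def)
  next
    case True
    have a1: "s * z$i \<le> k" using z by (simp add: Sh_def)
    have "s * w$i \<le> k" using s t a1 j k True wj by (auto simp: t_def sgn_if split: if_splits)
    then show ?thesis by (simp add: Sh_def)
  qed
  moreover have "l1 w < l1 z"
    unfolding l1_def
  proof (rule sum_strict_mono_ex1)
    show "\<forall>m\<in>UNIV. nat \<bar>w$m\<bar> \<le> nat \<bar>z$m\<bar>"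
    proof
      fix m show "nat \<bar>w$m\<bar> \<le> nat \<bar>z$m\<bar>"
      proof (cases "m = j")
        case True then show ?thesis using wj j by (auto simp: t_def sgn_if)
      next
        case False then show ?thesis using wm by simp
      qed
    qed
    show "\<exists>m\<in>UNIV. nat \<bar>w$m\<bar> < nat \<bar>z$m\<bar>"
      using wj j by (auto simp: t_def sgn_if)
  qed simp
  ultimately show ?thesis by blast
qed

end


theorem mainTheorem17:
  fixes x :: "int^'n"
  assumes "CARD('n) \<ge> 3"
  shows "(\<Sum>y\<in>nbrs x. \<bar>green0 x - green0 y\<bar>) > 0"
proof -
  note card = assms
  define i where "i = (undefined :: 'n)"
  define s where "s = (if x$i \<ge> 0 then 1 else -1 :: int)"
  define k where "k = s * x$i"
  have s: "s = 1 \<or> s = -1" by (simp add: s_def)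
  have k: "k \<ge> 0" by (simp add: k_def s_def)
  have xS: "x \<in> Sh i s k" unfolding Sh_def[OF s k] by (simp add: k_def)
  have lt: "Gf (Rfl i s k x) < Gf x"
    by (rule propagate[OF card Rfl_inv[OF s k] Rfl_nb[OF s k] Sh0[OF s k] Sh_out[OF s k] Sh_cross[OF s k] Sh_desc[OF s k] xS])
  have nb: "Rfl i s k x \<in> nbrs x"
  proof -
    have "(Rfl i s k x)$i - x$i = s * (2 * k + 1) - 2 * x$i" by (simp add: Rfl_i[OF s k])
    also have "\<dots> = s" using s unfolding k_def by auto
    finally have "(Rfl i s k x)$i - x$i = s" .
    then have "(\<Sum>j\<in>UNIV. ((Rfl i s k x)$j - x$j)^2) = (\<Sum>j\<in>UNIV. if j = i then 1 else 0)"
      using s by (intro sum.cong) (auto simp: Rfl_j[OF s k])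
    then show ?thesis by (simp add: nbrs_def)
  qed
  have G: "green0 = (Gf :: int^'n \<Rightarrow> real)" using green0_eq[OF card] by (rule ext)
  have "0 < \<bar>green0 x - green0 (Rfl i s k x)\<bar>" using lt G by simp
  also have "\<dots> \<le> (\<Sum>y\<in>nbrs x. \<bar>green0 x - green0 y\<bar>)"
    by (rule member_le_sum[OF nb _ finite_nbrs]) simp
  finally show ?thesis .
qed

end
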